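(* Let $n\ge 2$ and $1\le k\le n-1$. Let $L\in\mathbb{R}^{n\times n}$ be the Laplacian matrix of an undirected weighted graph on $n$ nodes, with eigenvalues $\lambda_1(L)\le\lambda_2(L)\le\cdots\le\lambda_n(L)$ and an associated orthonormal family of real eigenvectors $v_1(L),\dots,v_n(L)$. Let $g_1(s),\dots,g_n(s)$ and $f(s)$ be scalar transfer functions, $G(s)=\mathrm{diag}\{g_i(s)\}_{i=1}^n$, and define $$T_{yu}(s)=(I_n+G(s)f(s)L)^{-1}G(s),\qquad T_k(s)=V_k\big(V_k^TG^{-1}(s)V_k+f(s)\Lambda_k\big)^{-1}V_k^T,$$ where $V_k=[v_1(L)\ \cdots\ v_k(L)]$ and $\Lambda_k=\mathrm{diag}\{\lambda_i(L)\}_{i=1}^k$. Let $s_0\in\mathbb{C}$ be a point that is not a pole of $f(s)$ and such that the two quantities $$M_1:=\|T_k(s_0)\|,\qquad M_2:=\max_{1\le i\le n}|g_i^{-1}(s_0)|$$ are finite. Then whenever $|f(s_0)|\,\lambda_{k+1}(L)>M_2+M_1M_2^2$, the following inequality holds: $$\|T_{yu}(s_0)-T_k(s_0)\|\le\frac{(M_1M_2+1)^2}{|f(s_0)|\,\lambda_{k+1}(L)-M_2-M_1M_2^2}.$$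
   Context: $\|\cdot\|$ denotes the spectral norm of a matrix. $T_{yu}(s)$ is the transfer matrix from input $u$ to output $y$ of the feedback interconnection of the nodal dynamics $G(s)$ with the network coupling $f(s)L$ (negative feedback). $\lambda_i(L)$ denotes the $i$-th smallest eigenvalue of $L$. *)

theory Defs
  imports "HOL-Analysis.Analysis"
begin

definition laplacian_of :: "('n::finite \<Rightarrow> 'n \<Rightarrow> real) \<Rightarrow> real^'n^'n" where
  "laplacian_of w = (\<chi> i j. if i = j then (\<Sum>l\<in>UNIV - {i}. w i l) else - w i j)"

definition is_graph_laplacian :: "real^'n::finite^'n \<Rightarrow> bool" where
  "is_graph_laplacian L \<longleftrightarrow>
     (\<exists>w. (\<forall>i j. w i j = w j i) \<and> (\<forall>i j. 0 \<le> w i j) \<and> L = laplacian_of w)"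

definition spec_norm :: "complex^'n::finite^'m::finite \<Rightarrow> real" where
  "spec_norm A = onorm (\<lambda>x. A *v x)"

definition cmat_of_real :: "real^'n::finite^'m::finite \<Rightarrow> complex^'n^'m" where
  "cmat_of_real A = (\<chi> i j. complex_of_real (A $ i $ j))"

definition cdiag :: "('n::finite \<Rightarrow> complex) \<Rightarrow> complex^'n^'n" where
  "cdiag d = (\<chi> i j. if i = j then d i else 0)"

definition cscale :: "complex \<Rightarrow> complex^'n::finite^'m::finite \<Rightarrow> complex^'n^'m" where
  "cscale c A = (\<chi> i j. c * A $ i $ j)"

end

theory Submission
  imports Defs
begin

lemma matrix_inv_r: fixes A :: "'a::field^'n^'n"
  assumes "invertible A" shows "A ** matrix_inv A = mat 1"
  using someI_ex[OF assms[unfolded invertible_def]] unfolding matrix_inv_def by blast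

lemma matrix_inv_l: fixes A :: "'a::field^'n^'n"
  assumes "invertible A" shows "matrix_inv A ** A = mat 1"
  using someI_ex[OF assms[unfolded invertible_def]] unfolding matrix_inv_def by blast

lemma cscale_mv: "cscale c A *v x = c *s (A *v x)"
  by (simp add: cscale_def matrix_vector_mult_def vec_eq_iff sum_distrib_left mult.assoc)

lemma cmat_mult: "cmat_of_real (A ** B) = cmat_of_real A ** cmat_of_real B"
  by (simp add: cmat_of_real_def matrix_matrix_mult_def vec_eq_iff)

lemma cmat_transpose: "transpose (cmat_of_real A) = cmat_of_real (transpose A)"
  by (simp add: cmat_of_real_def transpose_def vec_eq_iff)

lemma cmat_one: "cmat_of_real (mat 1) = mat 1"
  by (simp add: cmat_of_real_def mat_def vec_eq_iff)

lemma cdiag_mult: "cdiag a ** cdiag b = cdiag (\<lambda>i. a i * b i)"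
proof -
  have "\<And>i j. (\<Sum>k\<in>UNIV. (if i = k then a i else 0) * (if k = j then b k else 0)) = (if i = j then a i * b i else 0)"
  proof -
    fix i j
    have "(\<Sum>k\<in>UNIV. (if i = k then a i else 0) * (if k = j then b k else 0))
       = (\<Sum>k\<in>UNIV. if i = k then a i * (if k = j then b k else 0) else 0)"
      by (rule sum.cong) auto
    also have "\<dots> = a i * (if i = j then b i else 0)" by (subst sum.delta') simp_all
    finally show "?thesis i j" by simp
  qed
  then show ?thesis by (simp add: cdiag_def matrix_matrix_mult_def vec_eq_iff)
qed

lemma cdiag_mv: "cdiag a *v x = (\<chi> i. a i * x $ i)"
proof -
  have "\<And>i. (\<Sum>j\<in>UNIV. (if i = j then a i else 0) * x $ j) = a i * x $ i"
  proof -
    fix i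
    have "(\<Sum>j\<in>UNIV. (if i = j then a i else 0) * x $ j) = (\<Sum>j\<in>UNIV. if i = j then a i * x $ j else 0)"
      by (rule sum.cong) auto
    also have "\<dots> = a i * x $ i" by (subst sum.delta') simp_all
    finally show "?thesis i" .
  qed
  then show ?thesis by (simp add: cdiag_def matrix_vector_mult_def vec_eq_iff)
qed

lemma norm_vec_sq: "norm (x::'a::real_normed_vector^'n)^2 = (\<Sum>i\<in>UNIV. norm (x$i)^2)"
  by (simp add: norm_vec_def L2_set_def sum_nonneg)

lemma cmat_adj: "(cmat_of_real R *v x) \<bullet> y = x \<bullet> (transpose (cmat_of_real R) *v y)"
proof -
  have "(cmat_of_real R *v x) \<bullet> y = (\<Sum>r\<in>UNIV. \<Sum>j\<in>UNIV. R$r$j * (x$j \<bullet> y$r))"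
    by (simp add: inner_vec_def matrix_vector_mult_def cmat_of_real_def inner_sum_left
        scaleR_conv_of_real[symmetric])
  also have "\<dots> = (\<Sum>j\<in>UNIV. \<Sum>r\<in>UNIV. R$r$j * (x$j \<bullet> y$r))" by (rule sum.swap)
  also have "\<dots> = x \<bullet> (transpose (cmat_of_real R) *v y)"
    by (simp add: inner_vec_def matrix_vector_mult_def cmat_of_real_def inner_sum_right transpose_def
        scaleR_conv_of_real[symmetric])
  finally show ?thesis .
qed

lemma norm_smult: "norm (c *s (x::complex^'n::finite)) = cmod c * norm x"
proof -
  have "norm (c *s x)^2 = (cmod c * norm x)^2"
    by (simp add: norm_vec_sq power_mult_distrib norm_mult sum_distrib_left)
  then show ?thesis by (rule power2_eq_imp_eq) simp_all
qed

lemma abstract_bound: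
  fixes Vc :: "complex^'k::finite^'n::finite" and Lc Hd Gd :: "complex^'n^'n"
    and Lk :: "complex^'k^'k" and f :: complex and M2 lamk :: real
  assumes adj: "\<And>x y. (Vc *v x) \<bullet> y = x \<bullet> (transpose Vc *v y)"
    and VtV: "transpose Vc ** Vc = mat 1"
    and LV: "Lc ** Vc = Vc ** Lk"
    and VL: "transpose Vc ** Lc = Lk ** transpose Vc"
    and GH: "Gd ** Hd = mat 1"
    and Hb: "\<And>x. norm (Hd *v x) \<le> M2 * norm x"
    and Lb: "\<And>z. transpose Vc *v z = 0 \<Longrightarrow> lamk * norm z \<le> norm (Lc *v z)"
    and inv: "invertible (transpose Vc ** Hd ** Vc + cscale f Lk)"
    and gap: "cmod f * lamk > M2 + spec_norm (Vc ** matrix_inv (transpose Vc ** Hd ** Vc + cscale f Lk) ** transpose Vc) * M2^2"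
    and M2: "0 \<le> M2"
  shows "invertible (mat 1 + Gd ** cscale f Lc) \<and>
    spec_norm (matrix_inv (mat 1 + Gd ** cscale f Lc) ** Gd
       - Vc ** matrix_inv (transpose Vc ** Hd ** Vc + cscale f Lk) ** transpose Vc)
    \<le> (spec_norm (Vc ** matrix_inv (transpose Vc ** Hd ** Vc + cscale f Lk) ** transpose Vc) * M2 + 1)^2
      / (cmod f * lamk - M2 - spec_norm (Vc ** matrix_inv (transpose Vc ** Hd ** Vc + cscale f Lk) ** transpose Vc) * M2^2)"
proof -
  define Vt where "Vt = transpose Vc"
  define A where "A = Vt ** Hd ** Vc + cscale f Lk"
  define Ai where "Ai = matrix_inv A"
  define Y where "Y = Vc ** Ai ** Vt"
  define M1 where "M1 = spec_norm Y"
  define B where "B = Hd + cscale f Lc"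
  define c where "c = cmod f * lamk - M2 - M1 * M2^2"
  define Q where "Q = (\<lambda>y. y - Vc *v (Vt *v y))"
  have M1: "0 \<le> M1" unfolding M1_def spec_norm_def
    using onorm_pos_le[OF matrix_vector_mul_bounded_linear[of Y]] by simp
  have c: "c > 0" using gap unfolding c_def M1_def Y_def Ai_def A_def Vt_def by simp
  have Mv: "\<And>u. norm (Y *v u) \<le> M1 * norm u" unfolding M1_def spec_norm_def
    using onorm[OF matrix_vector_mul_bounded_linear[of Y]] by simp
  have VtVc: "\<And>u. Vt *v (Vc *v u) = u" by (simp add: matrix_vector_mul_assoc VtV Vt_def)
  have Lk1: "\<And>u. Lc *v (Vc *v u) = Vc *v (Lk *v u)" by (metis LV matrix_vector_mul_assoc)
  have Lk2: "\<And>z. Vt *v (Lc *v z) = Lk *v (Vt *v z)" by (metis VL Vt_def matrix_vector_mul_assoc)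
  have Bv: "\<And>y. B *v y = Hd *v y + f *s (Lc *v y)"
    by (simp add: B_def matrix_vector_mult_add_rdistrib cscale_mv)
  have Av: "\<And>u. A *v u = Vt *v (Hd *v (Vc *v u)) + f *s (Lk *v u)"
    by (simp add: A_def matrix_vector_mult_add_rdistrib cscale_mv matrix_vector_mul_assoc matrix_mul_assoc)
  have AAi: "\<And>u. A *v (Ai *v u) = u"
    using matrix_inv_r[OF inv] by (simp add: Ai_def A_def Vt_def matrix_vector_mul_assoc)
  have AiA: "\<And>u. Ai *v (A *v u) = u"
    using matrix_inv_l[OF inv] by (simp add: Ai_def A_def Vt_def matrix_vector_mul_assoc)
  have VtBVc: "\<And>u. Vt *v (B *v (Vc *v u)) = A *v u"
    by (simp add: Bv Av Lk1 VtVc vec.add vec.scale)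
  have Yv: "\<And>w. Y *v w = Vc *v (Ai *v (Vt *v w))" by (simp add: Y_def matrix_vector_mul_assoc matrix_mul_assoc)
  have VtBY: "\<And>w. Vt *v (B *v (Y *v w)) = Vt *v w" by (simp add: Yv VtBVc AAi)
  have QVc: "\<And>u. Q (Vc *v u) = 0" by (simp add: Q_def VtVc)
  have Qfix: "\<And>y. Vt *v y = 0 \<Longrightarrow> Q y = y" by (simp add: Q_def)
  have VtQ: "\<And>y. Vt *v Q y = 0" by (simp add: Q_def vec.diff VtVc)
  have Qadd: "\<And>a b. Q (a + b) = Q a + Q b" by (simp add: Q_def vec.add)
  have Qdiff: "\<And>a b. Q (a - b) = Q a - Q b" by (simp add: Q_def vec.diff)
  have Qscale: "\<And>a. Q (f *s a) = f *s Q a" by (simp add: Q_def vec.scale vector_ssub_ldistrib)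
  have Qnorm: "\<And>y. norm (Q y) \<le> norm y"
  proof -
    fix y
    have "orthogonal (Vc *v (Vt *v y)) (Q y)"
      unfolding orthogonal_def adj Vt_def[symmetric] VtQ by simp
    then have "norm (Vc *v (Vt *v y) + Q y)^2 = norm (Vc *v (Vt *v y))^2 + norm (Q y)^2"
      by (rule norm_add_Pythagorean)
    moreover have "Vc *v (Vt *v y) + Q y = y" by (simp add: Q_def)
    ultimately have "norm (Q y)^2 \<le> norm y^2" by simp
    then show "norm (Q y) \<le> norm y" by (rule power2_le_imp_le[OF _ norm_ge_zero])
  qed
  have K1: "\<And>z. Vt *v z = 0 \<Longrightarrow> Vt *v (B *v (z - Y *v (Hd *v z))) = 0"
  proof -
    fix z assume z: "Vt *v z = 0"
    have "Vt *v (B *v z) = Vt *v (Hd *v z)" by (simp add: Bv vec.add vec.scale Lk2 z)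
    then show "Vt *v (B *v (z - Y *v (Hd *v z))) = 0" by (simp add: vec.diff VtBY)
  qed
  have K2: "\<And>x. Vt *v (B *v x) = 0 \<Longrightarrow> x = Q x - Y *v (Hd *v (Q x))"
  proof -
    fix x assume h: "Vt *v (B *v x) = 0"
    define u where "u = Vt *v x"
    have x: "x = Vc *v u + Q x" by (simp add: Q_def u_def)
    have "0 = Vt *v (B *v (Vc *v u + Q x))" using h x by simp
    also have "\<dots> = Vt *v (B *v (Vc *v u)) + Vt *v (B *v Q x)" by (simp only: vec.add)
    also have "\<dots> = A *v u + Vt *v (Hd *v Q x)"
    proof -
      have "Vt *v (B *v Q x) = Vt *v (Hd *v Q x)" by (simp add: Bv vec.add vec.scale Lk2 VtQ)
      then show ?thesis by (simp only: VtBVc)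
    qed
    finally have "A *v u = - (Vt *v (Hd *v Q x))" by (simp add: eq_neg_iff_add_eq_0)
    then have "u = - (Ai *v (Vt *v (Hd *v Q x)))" by (metis AiA vec.neg)
    then have "Vc *v u = - (Y *v (Hd *v Q x))" by (simp add: Yv vec.neg)
    then show "x = Q x - Y *v (Hd *v (Q x))" using x by simp
  qed
  have K3: "\<And>z. Vt *v z = 0 \<Longrightarrow> c * norm z \<le> norm (B *v (z - Y *v (Hd *v z)))"
  proof -
    fix z assume z: "Vt *v z = 0"
    let ?x = "z - Y *v (Hd *v z)"
    have "B *v ?x = Q (B *v ?x)" using K1[OF z] Qfix by simp
    also have "\<dots> = Q (Hd *v z) + f *s (Lc *v z) - Q (Hd *v (Y *v (Hd *v z)))"
    proof -
      have "Q (Lc *v z) = Lc *v z" using Qfix Lk2 z by simp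
      moreover have "Q (Lc *v (Y *v (Hd *v z))) = 0" by (simp add: Yv Lk1 QVc)
      ultimately show ?thesis by (simp add: vec.diff Bv Qadd Qdiff Qscale)
    qed
    finally have eq: "B *v ?x = f *s (Lc *v z) - (Q (Hd *v (Y *v (Hd *v z))) - Q (Hd *v z))"
      by simp
    have n1: "norm (f *s (Lc *v z)) \<ge> cmod f * lamk * norm z"
      using mult_left_mono[OF Lb[of z], of "cmod f"] z by (simp add: Vt_def norm_smult mult.assoc)
    have n2: "norm (Q (Hd *v z)) \<le> M2 * norm z" using Qnorm Hb order_trans by blast
    have "norm (Q (Hd *v (Y *v (Hd *v z)))) \<le> M2 * norm (Y *v (Hd *v z))" using Qnorm Hb order_trans by blast
    also have "\<dots> \<le> M2 * (M1 * norm (Hd *v z))" using Mv M2 mult_left_mono by blast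
    also have "\<dots> \<le> M2 * (M1 * (M2 * norm z))" using Hb M1 M2 by (simp add: mult_left_mono)
    finally have n3: "norm (Q (Hd *v (Y *v (Hd *v z)))) \<le> M1 * M2^2 * norm z"
      by (simp add: power2_eq_square algebra_simps)
    have "norm (B *v ?x) \<ge> norm (f *s (Lc *v z)) - norm (Q (Hd *v (Y *v (Hd *v z))) - Q (Hd *v z))"
      unfolding eq by (rule norm_triangle_ineq2)
    moreover have "norm (Q (Hd *v (Y *v (Hd *v z))) - Q (Hd *v z)) \<le> M1 * M2^2 * norm z + M2 * norm z"
      using norm_triangle_ineq4[of "Q (Hd *v (Y *v (Hd *v z)))" "Q (Hd *v z)"] n2 n3 by linarith
    ultimately show "c * norm z \<le> norm (B *v ?x)" using n1 unfolding c_def by (simp add: algebra_simps)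
  qed
  have K4: "\<And>w. norm (w - B *v (Y *v w)) \<le> (1 + M1 * M2) * norm w"
  proof -
    fix w
    have "Vt *v (w - B *v (Y *v w)) = 0" by (simp add: vec.diff VtBY)
    then have "w - B *v (Y *v w) = Q (w - B *v (Y *v w))" using Qfix by simp
    also have "\<dots> = Q w - Q (Hd *v (Y *v w))"
      by (simp add: Qdiff Bv Qadd Qscale Yv Lk1 QVc)
    finally have eq: "w - B *v (Y *v w) = Q w - Q (Hd *v (Y *v w))" .
    have "norm (Q (Hd *v (Y *v w))) \<le> M2 * norm (Y *v w)" using Qnorm Hb order_trans by blast
    also have "\<dots> \<le> M2 * (M1 * norm w)" using Mv M2 mult_left_mono by blast
    finally have "norm (Q (Hd *v (Y *v w))) \<le> M1 * M2 * norm w" by (simp add: algebra_simps)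
    then show "norm (w - B *v (Y *v w)) \<le> (1 + M1 * M2) * norm w"
      unfolding eq using norm_triangle_ineq4[of "Q w" "Q (Hd *v (Y *v w))"] Qnorm[of w]
      by (simp add: algebra_simps)
  qed
  have injB: "inj ((*v) B)"
  proof (rule injI)
    fix x y assume "B *v x = B *v y"
    then have h: "B *v (x - y) = 0" by (simp add: vec.diff)
    then have "Vt *v (B *v (x - y)) = 0" by simp
    note e = K2[OF this]
    have "c * norm (Q (x - y)) \<le> 0" using K3[OF VtQ[of "x - y"]] e h by simp
    then have "Q (x - y) = 0" using c by (simp add: mult_le_0_iff)
    then have "x - y = 0" using e by simp
    then show "x = y" by simp
  qed
  have invB: "invertible B"
    using injB matrix_left_invertible_injective invertible_left_inverse by blast
  have B0: "mat 1 + Gd ** cscale f Lc = Gd ** B"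
    by (simp add: B_def matrix_add_ldistrib GH)
  have invG: "invertible Gd" using GH invertible_right_inverse by blast
  have invB0: "invertible (mat 1 + Gd ** cscale f Lc)" unfolding B0 using invG invB invertible_mult by blast
  have Binv: "matrix_inv (mat 1 + Gd ** cscale f Lc) ** Gd = matrix_inv B"
  proof -
    let ?C = "matrix_inv (mat 1 + Gd ** cscale f Lc) ** Gd"
    have "?C ** B = mat 1" using matrix_inv_l[OF invB0] unfolding B0 by (simp add: matrix_mul_assoc)
    then show ?thesis by (metis matrix_inv_r[OF invB] matrix_mul_assoc matrix_mul_lid matrix_mul_rid)
  qed
  have main: "spec_norm (matrix_inv B - Y) \<le> (M1 * M2 + 1)^2 / c"
    unfolding spec_norm_def
  proof (rule onorm_le)
    fix w
    define x where "x = (matrix_inv B - Y) *v w"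
    have x: "x = matrix_inv B *v w - Y *v w" by (simp add: x_def matrix_vector_mult_diff_rdistrib)
    have Bx: "B *v x = w - B *v (Y *v w)"
      using matrix_inv_r[OF invB] by (simp add: x vec.diff matrix_vector_mul_assoc)
    have "Vt *v (B *v x) = 0" by (simp add: Bx vec.diff VtBY)
    note e = K2[OF this]
    have "c * norm (Q x) \<le> norm (B *v x)" using K3[OF VtQ[of x]] e by simp
    also have "\<dots> \<le> (1 + M1 * M2) * norm w" using K4 Bx by simp
    finally have z: "norm (Q x) \<le> (1 + M1 * M2) * norm w / c" using c by (simp add: field_simps)
    have "norm x \<le> norm (Q x) + norm (Y *v (Hd *v Q x))"
      using e norm_triangle_ineq4 by metis
    also have "\<dots> \<le> norm (Q x) + M1 * (M2 * norm (Q x))"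
    proof -
      have "norm (Y *v (Hd *v Q x)) \<le> M1 * norm (Hd *v Q x)" by (rule Mv)
      also have "\<dots> \<le> M1 * (M2 * norm (Q x))" using Hb[of "Q x"] M1 by (rule mult_left_mono)
      finally show ?thesis by simp
    qed
    also have "\<dots> = (1 + M1 * M2) * norm (Q x)" by (simp add: algebra_simps)
    also have "\<dots> \<le> (1 + M1 * M2) * ((1 + M1 * M2) * norm w / c)"
      by (rule mult_left_mono[OF z]) (simp add: M1 M2)
    finally show "norm ((matrix_inv B - Y) *v w) \<le> (M1 * M2 + 1)^2 / c * norm w"
      by (simp add: x_def power2_eq_square algebra_simps)
  qed
  have fin: "spec_norm (matrix_inv (mat 1 + Gd ** cscale f Lc) ** Gd - Y) \<le> (M1 * M2 + 1)^2 / c"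
    using main Binv by simp
  show ?thesis using conjI[OF invB0 fin]
    unfolding M1_def Y_def Ai_def A_def Vt_def c_def .
qed

lemma on_expand:
  fixes v :: "nat \<Rightarrow> real^'n::finite"
  assumes orth: "\<And>i j. i \<in> {1..CARD('n)} \<Longrightarrow> j \<in> {1..CARD('n)} \<Longrightarrow>
                  v i \<bullet> v j = (if i = j then 1 else 0)"
  shows "a = (\<Sum>i\<in>{1..CARD('n)}. (v i \<bullet> a) *\<^sub>R v i)"
proof -
  let ?I = "{1..CARD('n)}"
  let ?S = "v ` ?I"
  have inj: "inj_on v ?I"
  proof (rule inj_onI)
    fix i j assume i: "i \<in> ?I" and j: "j \<in> ?I" and e: "v i = v j"
    show "i = j"
    proof (rule ccontr)
      assume "i \<noteq> j"
      then have "v i \<bullet> v j = 0" using orth i j by simp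
      moreover have "v i \<bullet> v j = 1" using orth[OF i i] e by simp
      ultimately show False by simp
    qed
  qed
  have card: "card ?S = CARD('n)" using card_image[OF inj] by simp
  have po: "pairwise orthogonal ?S"
    unfolding pairwise_def orthogonal_def using orth by auto
  have z: "0 \<notin> ?S" using orth by fastforce
  have ind: "independent ?S" by (rule pairwise_orthogonal_independent[OF po z])
  have sp: "UNIV \<subseteq> span ?S"
    using card_eq_dim[of ?S UNIV] ind card by simp
  define e where "e = a - (\<Sum>i\<in>?I. (v i \<bullet> a) *\<^sub>R v i)"
  have oe: "\<And>y. y \<in> ?S \<Longrightarrow> orthogonal e y"
  proof -
    fix y assume "y \<in> ?S"
    then obtain j where j: "j \<in> ?I" and y: "y = v j" by auto
    have "v j \<bullet> (\<Sum>i\<in>?I. (v i \<bullet> a) *\<^sub>R v i) = (\<Sum>i\<in>?I. (v i \<bullet> a) * (v j \<bullet> v i))"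
      by (simp add: inner_sum_right)
    also have "\<dots> = (\<Sum>i\<in>?I. (v i \<bullet> a) * (if j = i then 1 else 0))"
      by (rule sum.cong[OF refl]) (simp add: orth[OF j])
    also have "\<dots> = v j \<bullet> a" using j by (simp add: if_distrib cong: if_cong)
    finally have h: "v j \<bullet> (\<Sum>i\<in>?I. (v i \<bullet> a) *\<^sub>R v i) = v j \<bullet> a" .
    have "orthogonal (v j) e" unfolding orthogonal_def e_def inner_diff_right h by simp
    then show "orthogonal e y" using y orthogonal_commute by blast
  qed
  have "orthogonal e e" using orthogonal_to_span[of e ?S e] sp oe by auto
  then have "e = 0" by (simp add: orthogonal_def)
  then show ?thesis by (simp add: e_def)
qed

lemma on_coef:
  fixes v :: "nat \<Rightarrow> real^'n::finite"
  assumes orth: "\<And>i j. i \<in> {1..CARD('n)} \<Longrightarrow> j \<in> {1..CARD('n)} \<Longrightarrow>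
                  v i \<bullet> v j = (if i = j then 1 else 0)"
    and j: "j \<in> {1..CARD('n)}"
  shows "v j \<bullet> (\<Sum>i\<in>{1..CARD('n)}. c i *\<^sub>R v i) = c j"
proof -
  have "v j \<bullet> (\<Sum>i\<in>{1..CARD('n)}. c i *\<^sub>R v i) = (\<Sum>i\<in>{1..CARD('n)}. c i * (v j \<bullet> v i))"
    by (simp add: inner_sum_right)
  also have "\<dots> = (\<Sum>i\<in>{1..CARD('n)}. c i * (if j = i then 1 else 0))"
    by (rule sum.cong[OF refl]) (simp add: orth[OF j])
  also have "\<dots> = c j" using j by (simp add: if_distrib cong: if_cong)
  finally show ?thesis .
qed

lemma on_norm:
  fixes v :: "nat \<Rightarrow> real^'n::finite"
  assumes orth: "\<And>i j. i \<in> {1..CARD('n)} \<Longrightarrow> j \<in> {1..CARD('n)} \<Longrightarrow>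
                  v i \<bullet> v j = (if i = j then 1 else 0)"
  shows "norm (\<Sum>i\<in>{1..CARD('n)}. c i *\<^sub>R v i)^2 = (\<Sum>i\<in>{1..CARD('n)}. (c i)^2)"
proof -
  let ?I = "{1..CARD('n)}"
  let ?s = "\<Sum>i\<in>?I. c i *\<^sub>R v i"
  have "norm ?s^2 = (\<Sum>i\<in>?I. c i * (v i \<bullet> ?s))"
    by (simp add: power2_norm_eq_inner inner_sum_left)
  also have "\<dots> = (\<Sum>i\<in>?I. (c i)^2)"
  proof (rule sum.cong[OF refl])
    fix i assume "i \<in> ?I"
    then show "c i * (v i \<bullet> ?s) = (c i)^2" using on_coef[OF orth, of i c] by (simp add: power2_eq_square)
  qed
  finally show ?thesis .
qed

lemma eig_lower:
  fixes L :: "real^'n::finite^'n" and v :: "nat \<Rightarrow> real^'n" and lam :: "nat \<Rightarrow> real"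
  assumes eig: "\<And>i. i \<in> {1..CARD('n)} \<Longrightarrow> L *v v i = lam i *s v i"
    and orth: "\<And>i j. i \<in> {1..CARD('n)} \<Longrightarrow> j \<in> {1..CARD('n)} \<Longrightarrow>
                  v i \<bullet> v j = (if i = j then 1 else 0)"
    and sorted: "\<And>i j. i \<in> {1..CARD('n)} \<Longrightarrow> j \<in> {1..CARD('n)} \<Longrightarrow> i \<le> j \<Longrightarrow> lam i \<le> lam j"
    and sym: "transpose L = L"
    and k: "k < CARD('n)" and lpos: "0 \<le> lam (k+1)"
    and perp: "\<And>i. i \<in> {1..k} \<Longrightarrow> v i \<bullet> a = 0"
  shows "lam (k+1) * norm a \<le> norm (L *v a)"
proof -
  let ?I = "{1..CARD('n)}"
  have coef: "\<And>i. i \<in> ?I \<Longrightarrow> v i \<bullet> (L *v a) = lam i * (v i \<bullet> a)"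
  proof -
    fix i assume i: "i \<in> ?I"
    have "v i \<bullet> (L *v a) = (v i v* L) \<bullet> a" by (simp add: dot_lmul_matrix)
    also have "v i v* L = L *v v i" by (metis sym transpose_matrix_vector)
    finally show "v i \<bullet> (L *v a) = lam i * (v i \<bullet> a)" using eig[OF i]
      by (simp add: scalar_mult_eq_scaleR)
  qed
  have na: "norm a^2 = (\<Sum>i\<in>?I. (v i \<bullet> a)^2)"
    using on_norm[OF orth, of "\<lambda>i. v i \<bullet> a"] on_expand[OF orth, of a] by simp
  have nLa: "norm (L *v a)^2 = (\<Sum>i\<in>?I. (lam i * (v i \<bullet> a))^2)"
  proof -
    have "norm (L *v a)^2 = (\<Sum>i\<in>?I. (v i \<bullet> (L *v a))^2)"
      using on_norm[OF orth, of "\<lambda>i. v i \<bullet> (L *v a)"] on_expand[OF orth, of "L *v a"] by simp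
    also have "\<dots> = (\<Sum>i\<in>?I. (lam i * (v i \<bullet> a))^2)"
      by (rule sum.cong[OF refl]) (simp add: coef)
    finally show ?thesis .
  qed
  have "(lam (k+1) * norm a)^2 = (\<Sum>i\<in>?I. (lam (k+1))^2 * (v i \<bullet> a)^2)"
    by (simp add: power_mult_distrib na sum_distrib_left)
  also have "\<dots> \<le> (\<Sum>i\<in>?I. (lam i * (v i \<bullet> a))^2)"
  proof (rule sum_mono)
    fix i assume i: "i \<in> ?I"
    show "(lam (k+1))^2 * (v i \<bullet> a)^2 \<le> (lam i * (v i \<bullet> a))^2"
    proof (cases "i \<le> k")
      case True
      then have "v i \<bullet> a = 0" using perp i by simp
      then show ?thesis by simp
    next
      case False
      then have "lam (k+1) \<le> lam i" using sorted[of "k+1" i] i k by simp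
      then have "(lam (k+1))^2 \<le> (lam i)^2" using lpos by (simp add: power_mono)
      then show ?thesis by (simp add: power_mult_distrib mult_right_mono)
    qed
  qed
  finally have "(lam (k+1) * norm a)^2 \<le> norm (L *v a)^2" using nLa by simp
  then show ?thesis by (rule power2_le_imp_le[OF _ norm_ge_zero])
qed

lemma norm_re_im: "norm (w::complex^'n::finite)^2 = norm (\<chi> r. Re (w$r))^2 + norm (\<chi> r. Im (w$r))^2"
  by (simp add: norm_vec_sq cmod_power2 sum.distrib)

lemma diag_bound:
  fixes h :: "'n::finite \<Rightarrow> complex"
  shows "norm (cdiag h *v x) \<le> (MAX i. cmod (h i)) * norm x"
proof -
  let ?M = "MAX i. cmod (h i)"
  have hM: "\<And>i. cmod (h i) \<le> ?M" by (simp add: Max_ge)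
  have M0: "0 \<le> ?M" using hM[of undefined] norm_ge_zero order_trans by blast
  have "norm (cdiag h *v x)^2 = (\<Sum>i\<in>UNIV. (cmod (h i))^2 * (cmod (x$i))^2)"
    by (simp add: cdiag_mv norm_vec_sq norm_mult power_mult_distrib)
  also have "\<dots> \<le> (\<Sum>i\<in>UNIV. ?M^2 * (cmod (x$i))^2)"
    by (rule sum_mono, rule mult_right_mono[OF power_mono[OF hM norm_ge_zero]]) simp
  also have "\<dots> = (?M * norm x)^2" by (simp add: norm_vec_sq power_mult_distrib sum_distrib_left)
  finally show ?thesis by (rule power2_le_imp_le[OF _ mult_nonneg_nonneg[OF M0 norm_ge_zero]])
qed

lemma eig_lower_c:
  fixes L :: "real^'n::finite^'n" and v :: "nat \<Rightarrow> real^'n" and lam :: "nat \<Rightarrow> real"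
    and ord :: "'k::finite \<Rightarrow> nat" and z :: "complex^'n"
  assumes eig: "\<And>i. i \<in> {1..CARD('n)} \<Longrightarrow> L *v v i = lam i *s v i"
    and orth: "\<And>i j. i \<in> {1..CARD('n)} \<Longrightarrow> j \<in> {1..CARD('n)} \<Longrightarrow>
                  v i \<bullet> v j = (if i = j then 1 else 0)"
    and sorted: "\<And>i j. i \<in> {1..CARD('n)} \<Longrightarrow> j \<in> {1..CARD('n)} \<Longrightarrow> i \<le> j \<Longrightarrow> lam i \<le> lam j"
    and sym: "transpose L = L"
    and k: "CARD('k) < CARD('n)" and lpos: "0 \<le> lam (CARD('k)+1)"
    and ord_bij: "bij_betw ord (UNIV :: 'k set) {1..CARD('k)}"
    and perp: "transpose (cmat_of_real (\<chi> r j. v (ord j) $ r :: real^'k^'n)) *v z = 0"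
  shows "lam (CARD('k)+1) * norm z \<le> norm (cmat_of_real L *v z)"
proof -
  define a where "a = (\<chi> r. Re (z$r))"
  define b where "b = (\<chi> r. Im (z$r))"
  have pa: "\<And>i. i \<in> {1..CARD('k)} \<Longrightarrow> v i \<bullet> a = 0" and pb: "\<And>i. i \<in> {1..CARD('k)} \<Longrightarrow> v i \<bullet> b = 0"
  proof -
    fix i assume "i \<in> {1..CARD('k)}"
    then obtain j where j: "ord j = i" using ord_bij by (metis bij_betw_def imageE)
    have e: "(\<Sum>r\<in>UNIV. complex_of_real (v i $ r) * z $ r) = 0"
      using arg_cong[OF perp, of "\<lambda>w. w $ j"] j
      by (simp add: matrix_vector_mult_def cmat_of_real_def transpose_def)
    have "Re (\<Sum>r\<in>UNIV. complex_of_real (v i $ r) * z $ r) = v i \<bullet> a"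
      by (simp add: a_def inner_vec_def Re_sum)
    then show "v i \<bullet> a = 0" using e by simp
    have "Im (\<Sum>r\<in>UNIV. complex_of_real (v i $ r) * z $ r) = v i \<bullet> b"
      by (simp add: b_def inner_vec_def Im_sum)
    then show "v i \<bullet> b = 0" using e by simp
  qed
  have la: "lam (CARD('k)+1) * norm a \<le> norm (L *v a)"
    by (rule eig_lower[OF eig orth sorted sym k lpos pa]) auto
  have lb: "lam (CARD('k)+1) * norm b \<le> norm (L *v b)"
    by (rule eig_lower[OF eig orth sorted sym k lpos pb]) auto
  have ra: "(\<chi> r. Re ((cmat_of_real L *v z)$r)) = L *v a"
    by (simp add: vec_eq_iff a_def matrix_vector_mult_def cmat_of_real_def Re_sum)
  have rb: "(\<chi> r. Im ((cmat_of_real L *v z)$r)) = L *v b"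
    by (simp add: vec_eq_iff b_def matrix_vector_mult_def cmat_of_real_def Im_sum)
  have "(lam (CARD('k)+1) * norm z)^2 = (lam (CARD('k)+1) * norm a)^2 + (lam (CARD('k)+1) * norm b)^2"
    by (simp add: power_mult_distrib norm_re_im[of z] a_def b_def algebra_simps)
  also have "\<dots> \<le> norm (L *v a)^2 + norm (L *v b)^2"
    using la lb lpos by (simp add: add_mono power_mono)
  also have "\<dots> = norm (cmat_of_real L *v z)^2"
    using norm_re_im[of "cmat_of_real L *v z"] ra rb by simp
  finally show ?thesis by (rule power2_le_imp_le[OF _ norm_ge_zero])
qed

theorem theorem1:
  fixes L :: "real^'n::finite^'n"
    and lam :: "nat \<Rightarrow> real"
    and v :: "nat \<Rightarrow> real^'n"
    and ord :: "'k::finite \<Rightarrow> nat"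
    and g :: "'n \<Rightarrow> complex \<Rightarrow> complex"
    and f :: "complex \<Rightarrow> complex"
    and s0 :: complex
  assumes n2: "CARD('n) \<ge> 2"
    and k_lt: "CARD('k) < CARD('n)"
    and lap: "is_graph_laplacian L"
    and eig: "\<And>i. i \<in> {1..CARD('n)} \<Longrightarrow> L *v v i = lam i *s v i"
    and orth: "\<And>i j. i \<in> {1..CARD('n)} \<Longrightarrow> j \<in> {1..CARD('n)} \<Longrightarrow>
                  v i \<bullet> v j = (if i = j then 1 else 0)"
    and sorted: "\<And>i j. i \<in> {1..CARD('n)} \<Longrightarrow> j \<in> {1..CARD('n)} \<Longrightarrow> i \<le> j \<Longrightarrow> lam i \<le> lam j"
    and ord_bij: "bij_betw ord (UNIV :: 'k set) {1..CARD('k)}"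
    and g_nz: "\<And>i. g i s0 \<noteq> 0"
    and Tk_fin: "invertible (transpose (cmat_of_real (\<chi> r j. v (ord j) $ r :: real^'k^'n))
                   ** cdiag (\<lambda>i. inverse (g i s0))
                   ** cmat_of_real (\<chi> r j. v (ord j) $ r :: real^'k^'n)
                 + cscale (f s0) (cdiag (\<lambda>j. complex_of_real (lam (ord j)))))"
    and gap: "cmod (f s0) * lam (CARD('k) + 1) >
              (MAX i. cmod (inverse (g i s0)))
              + spec_norm (cmat_of_real (\<chi> r j. v (ord j) $ r :: real^'k^'n)
                  ** matrix_inv (transpose (cmat_of_real (\<chi> r j. v (ord j) $ r :: real^'k^'n))
                   ** cdiag (\<lambda>i. inverse (g i s0))
                   ** cmat_of_real (\<chi> r j. v (ord j) $ r :: real^'k^'n)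
                   + cscale (f s0) (cdiag (\<lambda>j. complex_of_real (lam (ord j)))))
                  ** transpose (cmat_of_real (\<chi> r j. v (ord j) $ r :: real^'k^'n)))
                * (MAX i. cmod (inverse (g i s0)))^2"
  shows "invertible (mat 1 + cdiag (\<lambda>i. g i s0) ** cscale (f s0) (cmat_of_real L)) \<and>
         spec_norm (matrix_inv (mat 1 + cdiag (\<lambda>i. g i s0) ** cscale (f s0) (cmat_of_real L))
                      ** cdiag (\<lambda>i. g i s0)
                    - cmat_of_real (\<chi> r j. v (ord j) $ r :: real^'k^'n)
                  ** matrix_inv (transpose (cmat_of_real (\<chi> r j. v (ord j) $ r :: real^'k^'n))
                   ** cdiag (\<lambda>i. inverse (g i s0))
                   ** cmat_of_real (\<chi> r j. v (ord j) $ r :: real^'k^'n)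
                   + cscale (f s0) (cdiag (\<lambda>j. complex_of_real (lam (ord j)))))
                  ** transpose (cmat_of_real (\<chi> r j. v (ord j) $ r :: real^'k^'n)))
         \<le> (spec_norm (cmat_of_real (\<chi> r j. v (ord j) $ r :: real^'k^'n)
                  ** matrix_inv (transpose (cmat_of_real (\<chi> r j. v (ord j) $ r :: real^'k^'n))
                   ** cdiag (\<lambda>i. inverse (g i s0))
                   ** cmat_of_real (\<chi> r j. v (ord j) $ r :: real^'k^'n)
                   + cscale (f s0) (cdiag (\<lambda>j. complex_of_real (lam (ord j)))))
                  ** transpose (cmat_of_real (\<chi> r j. v (ord j) $ r :: real^'k^'n)))
              * (MAX i. cmod (inverse (g i s0))) + 1)^2
           / (cmod (f s0) * lam (CARD('k) + 1) - (MAX i. cmod (inverse (g i s0)))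
              - spec_norm (cmat_of_real (\<chi> r j. v (ord j) $ r :: real^'k^'n)
                  ** matrix_inv (transpose (cmat_of_real (\<chi> r j. v (ord j) $ r :: real^'k^'n))
                   ** cdiag (\<lambda>i. inverse (g i s0))
                   ** cmat_of_real (\<chi> r j. v (ord j) $ r :: real^'k^'n)
                   + cscale (f s0) (cdiag (\<lambda>j. complex_of_real (lam (ord j)))))
                  ** transpose (cmat_of_real (\<chi> r j. v (ord j) $ r :: real^'k^'n)))
                * (MAX i. cmod (inverse (g i s0)))^2)"
proof -
  define V where "V = (\<chi> r j. v (ord j) $ r :: real^'k^'n)"
  define D where "D = (\<chi> i j. if i = j then lam (ord j) else 0 :: real^'k^'k)"
  define M2 where "M2 = (MAX i. cmod (inverse (g i s0)))"
  have ordI: "\<And>j. ord j \<in> {1..CARD('k)}" using ord_bij by (auto simp: bij_betw_def)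
  have ordN: "\<And>j. ord j \<in> {1..CARD('n)}" using ordI k_lt by fastforce
  have ordinj: "\<And>i j. ord i = ord j \<longleftrightarrow> i = j" using ord_bij by (auto simp: bij_betw_def inj_on_def)
  have Lsym: "transpose L = L"
  proof -
    obtain w where w: "\<forall>i j. w i j = w j i" and L: "L = laplacian_of w"
      using lap unfolding is_graph_laplacian_def by blast
    show ?thesis unfolding L laplacian_of_def transpose_def vec_eq_iff using w by auto
  qed
  have R1: "transpose V ** V = mat 1"
  proof -
    have "\<And>i j. (\<Sum>r\<in>UNIV. v (ord i) $ r * v (ord j) $ r) = (if i = j then 1 else 0)"
    proof -
      fix i j
      have "(\<Sum>r\<in>UNIV. v (ord i) $ r * v (ord j) $ r) = v (ord i) \<bullet> v (ord j)"
        by (simp add: inner_vec_def)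
      also have "\<dots> = (if i = j then 1 else 0)" using orth[OF ordN ordN] ordinj by simp
      finally show "?thesis i j" .
    qed
    then show ?thesis by (simp add: V_def transpose_def matrix_matrix_mult_def mat_def vec_eq_iff)
  qed
  have R2: "L ** V = V ** D"
  proof -
    have "\<And>r j. (\<Sum>s\<in>UNIV. L $ r $ s * v (ord j) $ s) = lam (ord j) * v (ord j) $ r"
    proof -
      fix r j
      have "(\<Sum>s\<in>UNIV. L $ r $ s * v (ord j) $ s) = (L *v v (ord j)) $ r"
        by (simp add: matrix_vector_mult_def)
      also have "\<dots> = lam (ord j) * v (ord j) $ r" using eig[OF ordN] by simp
      finally show "?thesis r j" .
    qed
    moreover have "\<And>r j. (\<Sum>i\<in>UNIV. v (ord i) $ r * (if i = j then lam (ord j) else 0)) = lam (ord j) * v (ord j) $ r"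
    proof -
      fix r j
      have "(\<Sum>i\<in>UNIV. v (ord i) $ r * (if i = j then lam (ord j) else 0))
          = (\<Sum>i\<in>UNIV. if i = j then v (ord i) $ r * lam (ord j) else 0)"
        by (rule sum.cong) auto
      also have "\<dots> = lam (ord j) * v (ord j) $ r" by (subst sum.delta) simp_all
      finally show "?thesis r j" .
    qed
    ultimately show ?thesis by (simp add: V_def D_def matrix_matrix_mult_def vec_eq_iff)
  qed
  have DT: "transpose D = D" by (simp add: D_def transpose_def vec_eq_iff)
  have R3: "transpose V ** L = D ** transpose V"
    using arg_cong[OF R2, of transpose] by (simp add: matrix_transpose_mul Lsym DT)
  have cD: "cdiag (\<lambda>j. complex_of_real (lam (ord j))) = cmat_of_real D"
    by (simp add: cdiag_def cmat_of_real_def D_def vec_eq_iff)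
  have GH: "cdiag (\<lambda>i. g i s0) ** cdiag (\<lambda>i. inverse (g i s0)) = mat 1"
    unfolding cdiag_mult by (simp add: g_nz cdiag_def mat_def vec_eq_iff)
  have hM: "cmod (inverse (g undefined s0)) \<le> M2" unfolding M2_def by (simp add: Max_ge)
  have M2: "0 \<le> M2" using hM norm_ge_zero order_trans by blast
  define M1 where "M1 = spec_norm (cmat_of_real V
                  ** matrix_inv (transpose (cmat_of_real V)
                   ** cdiag (\<lambda>i. inverse (g i s0))
                   ** cmat_of_real V
                   + cscale (f s0) (cdiag (\<lambda>j. complex_of_real (lam (ord j)))))
                  ** transpose (cmat_of_real V))"
  have M1: "0 \<le> M1" unfolding M1_def spec_norm_def
    by (intro onorm_pos_le matrix_vector_mul_bounded_linear)
  have lpos: "0 \<le> lam (CARD('k)+1)"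
  proof -
    have "0 \<le> M2 + M1 * M2^2" using M1 M2 by simp
    also have "\<dots> < cmod (f s0) * lam (CARD('k) + 1)" using gap unfolding M1_def M2_def V_def .
    finally show ?thesis by (simp add: zero_less_mult_iff)
  qed
  have A: ?thesis
    unfolding V_def[symmetric] M2_def[symmetric]
  proof (rule abstract_bound[where Lk = "cdiag (\<lambda>j. complex_of_real (lam (ord j)))"
        and Lc = "cmat_of_real L"])
    show "\<And>x y. (cmat_of_real V *v x) \<bullet> y = x \<bullet> (transpose (cmat_of_real V) *v y)" by (rule cmat_adj)
    show "transpose (cmat_of_real V) ** cmat_of_real V = mat 1"
      by (simp add: cmat_transpose cmat_mult[symmetric] R1 cmat_one)
    show "cmat_of_real L ** cmat_of_real V = cmat_of_real V ** cdiag (\<lambda>j. complex_of_real (lam (ord j)))"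
      by (simp add: cD cmat_mult[symmetric] R2)
    show "transpose (cmat_of_real V) ** cmat_of_real L = cdiag (\<lambda>j. complex_of_real (lam (ord j))) ** transpose (cmat_of_real V)"
      by (simp add: cD cmat_transpose cmat_mult[symmetric] R3)
    show "cdiag (\<lambda>i. g i s0) ** cdiag (\<lambda>i. inverse (g i s0)) = mat 1" by (rule GH)
    show "\<And>x. norm (cdiag (\<lambda>i. inverse (g i s0)) *v x) \<le> M2 * norm x"
      unfolding M2_def by (rule diag_bound)
    show "\<And>z. transpose (cmat_of_real V) *v z = 0 \<Longrightarrow> lam (CARD('k)+1) * norm z \<le> norm (cmat_of_real L *v z)"
      unfolding V_def by (rule eig_lower_c[OF eig orth sorted Lsym k_lt lpos ord_bij])
    show "invertible (transpose (cmat_of_real V) ** cdiag (\<lambda>i. inverse (g i s0)) ** cmat_of_real V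
        + cscale (f s0) (cdiag (\<lambda>j. complex_of_real (lam (ord j)))))"
      using Tk_fin unfolding V_def .
    show "cmod (f s0) * lam (CARD('k)+1) > M2 + spec_norm (cmat_of_real V ** matrix_inv (transpose (cmat_of_real V) ** cdiag (\<lambda>i. inverse (g i s0)) ** cmat_of_real V + cscale (f s0) (cdiag (\<lambda>j. complex_of_real (lam (ord j))))) ** transpose (cmat_of_real V)) * M2^2"
      using gap unfolding V_def M2_def .
    show "0 \<le> M2" by (rule M2)
  qed
  show ?thesis by (rule A)
qed

end
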